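(* Let $T$ be a tree with exactly four pendant vertices $u_1,u_2,u_3,u_4$ and exactly two major vertices $m_1\ne m_2$, such that $T$ is the union of the paths $P_{u_1,m_1}$, $P_{u_2,m_1}$, $P_{m_1,m_2}$, $P_{u_3,m_2}$, $P_{u_4,m_2}$, where $P_{u_1,m_1}$ and $P_{u_2,m_1}$ are glued to $P_{m_1,m_2}$ at $m_1$, and $P_{u_3,m_2}$ and $P_{u_4,m_2}$ are glued at $m_2$ (these five paths being otherwise disjoint). If $m(T,1)\ge 2$, then $d(u_1,m_1)\equiv d(u_2,m_1)\equiv 1\pmod 3$ or $d(u_3,m_2)\equiv d(u_4,m_2)\equiv 1\pmod 3$.
   Context: $m(T,\lambda)$ denotes the multiplicity of $\lambda$ as an eigenvalue of the Laplacian matrix $L(T)=D(T)-A(T)$. A pendant vertex has degree $1$; a major vertex has degree at least $3$. $P_{r,s}$ is the path from $r$ to $s$; $d$ denotes distance. *)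

theory Defs
  imports "Jordan_Normal_Form.Char_Poly"
begin

definition simple_graph :: "nat \<Rightarrow> (nat \<Rightarrow> nat \<Rightarrow> bool) \<Rightarrow> bool" where
  "simple_graph n E \<longleftrightarrow> (\<forall>i j. E i j \<longrightarrow> i < n \<and> j < n) \<and> (\<forall>i j. E i j \<longrightarrow> E j i)
      \<and> (\<forall>i. \<not> E i i)"

definition is_walk :: "(nat \<Rightarrow> nat \<Rightarrow> bool) \<Rightarrow> nat list \<Rightarrow> bool" where
  "is_walk E xs \<longleftrightarrow> xs \<noteq> [] \<and> (\<forall>k. Suc k < length xs \<longrightarrow> E (xs ! k) (xs ! Suc k))"

definition is_path :: "(nat \<Rightarrow> nat \<Rightarrow> bool) \<Rightarrow> nat list \<Rightarrow> bool" where
  "is_path E xs \<longleftrightarrow> is_walk E xs \<and> distinct xs"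

definition is_cycle :: "(nat \<Rightarrow> nat \<Rightarrow> bool) \<Rightarrow> nat list \<Rightarrow> bool" where
  "is_cycle E xs \<longleftrightarrow> is_path E xs \<and> length xs \<ge> 3 \<and> E (last xs) (hd xs)"

definition connected_graph :: "nat \<Rightarrow> (nat \<Rightarrow> nat \<Rightarrow> bool) \<Rightarrow> bool" where
  "connected_graph n E \<longleftrightarrow> (\<forall>x<n. \<forall>y<n. \<exists>xs. is_walk E xs \<and> hd xs = x \<and> last xs = y)"

definition is_tree :: "nat \<Rightarrow> (nat \<Rightarrow> nat \<Rightarrow> bool) \<Rightarrow> bool" where
  "is_tree n E \<longleftrightarrow> n \<ge> 1 \<and> simple_graph n E \<and> connected_graph n E \<and> (\<nexists>xs. is_cycle E xs)"

definition degree :: "nat \<Rightarrow> (nat \<Rightarrow> nat \<Rightarrow> bool) \<Rightarrow> nat \<Rightarrow> nat" where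
  "degree n E i = card {j. j < n \<and> E i j}"

definition pendant :: "nat \<Rightarrow> (nat \<Rightarrow> nat \<Rightarrow> bool) \<Rightarrow> nat \<Rightarrow> bool" where
  "pendant n E v \<longleftrightarrow> v < n \<and> degree n E v = 1"

definition major :: "nat \<Rightarrow> (nat \<Rightarrow> nat \<Rightarrow> bool) \<Rightarrow> nat \<Rightarrow> bool" where
  "major n E v \<longleftrightarrow> v < n \<and> degree n E v \<ge> 3"

definition dist_graph :: "(nat \<Rightarrow> nat \<Rightarrow> bool) \<Rightarrow> nat \<Rightarrow> nat \<Rightarrow> nat" where
  "dist_graph E x y = (LEAST k. \<exists>xs. is_walk E xs \<and> hd xs = x \<and> last xs = y \<and> length xs = Suc k)"

text \<open>Vertex set of the path P_{r,s} (in a tree the path is unique).\<close>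
definition path_verts :: "(nat \<Rightarrow> nat \<Rightarrow> bool) \<Rightarrow> nat \<Rightarrow> nat \<Rightarrow> nat set" where
  "path_verts E r s = {z. \<exists>xs. is_path E xs \<and> hd xs = r \<and> last xs = s \<and> z \<in> set xs}"

definition laplacian :: "nat \<Rightarrow> (nat \<Rightarrow> nat \<Rightarrow> bool) \<Rightarrow> real mat" where
  "laplacian n E = mat n n (\<lambda>(i, j). if i = j then real (degree n E i) else if E i j then -1 else 0)"

text \<open>m(T,\<lambda>): multiplicity of \<lambda> as an eigenvalue of L(T) (root multiplicity in
the characteristic polynomial; equals geometric multiplicity as L is symmetric).\<close>
definition lap_mult :: "nat \<Rightarrow> (nat \<Rightarrow> nat \<Rightarrow> bool) \<Rightarrow> real \<Rightarrow> nat" where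
  "lap_mult n E lam = order lam (char_poly (laplacian n E))"

end

theory Submission
  imports Defs "Jordan_Normal_Form.Jordan_Normal_Form_Existence" "Jordan_Normal_Form.Jordan_Normal_Form_Uniqueness"
begin


lemma sum_min2: "min 2 (sum_list xs) \<le> sum_list (map (min (2::nat)) xs)"
  by (induct xs) auto

lemma herm_kernel:
  fixes M :: "complex mat"
  assumes M: "M \<in> carrier_mat n n"
    and sym: "\<And>i j. i < n \<Longrightarrow> j < n \<Longrightarrow> M $$ (i,j) = M $$ (j,i)"
    and real: "\<And>i j. i < n \<Longrightarrow> j < n \<Longrightarrow> cnj (M $$ (i,j)) = M $$ (i,j)"
    and v: "v \<in> carrier_vec n"
    and z: "M *\<^sub>v (M *\<^sub>v v) = 0\<^sub>v n"
  shows "M *\<^sub>v v = 0\<^sub>v n"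
proof -
  define w where "w = M *\<^sub>v v"
  have w: "w \<in> carrier_vec n" unfolding w_def using M v by auto
  have tr: "transpose_mat M = M"
    by (rule eq_matI, insert M sym, auto)
  have cw: "M *\<^sub>v conjugate w = conjugate (M *\<^sub>v w)"
  proof (rule eq_vecI)
    fix j assume "j < dim_vec (conjugate (M *\<^sub>v w))"
    hence j: "j < n" using M by auto
    have "(M *\<^sub>v conjugate w) $ j = (\<Sum>i = 0..<n. M $$ (j,i) * cnj (w $ i))"
      using M w j by (simp add: scalar_prod_def)
    also have "\<dots> = cnj (\<Sum>i = 0..<n. M $$ (j,i) * w $ i)"
      by (simp add: cnj_sum real j)
    also have "\<dots> = conjugate (M *\<^sub>v w) $ j"
      using M w j by (simp add: scalar_prod_def)
    finally show "(M *\<^sub>v conjugate w) $ j = conjugate (M *\<^sub>v w) $ j" .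
  qed (insert M w, auto)
  have "w \<bullet>c w = (transpose_mat M *\<^sub>v v) \<bullet> conjugate w" unfolding w_def tr ..
  also have "\<dots> = v \<bullet> (M *\<^sub>v conjugate w)"
    by (rule transpose_vec_mult_scalar[OF M], insert w v, auto)
  also have "\<dots> = 0" unfolding cw unfolding w_def z using v by simp
  finally show ?thesis using w unfolding w_def by simp
qed

lemma kernel_dim_cong:
  assumes "dim_col A = dim_col B" "mat_kernel A = mat_kernel B"
  shows "kernel_dim A = kernel_dim B"
  unfolding kernel_dim_def using assms by simp

lemma order_of_real: "Polynomial.order (1::complex) (map_poly of_real f) = Polynomial.order 1 f"
proof -
  interpret h: map_poly_inj_idom_divide_hom complex_of_real ..
  show ?thesis using h.order_hom[of 1 f] by simp
qed

lemma LA_main: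
  fixes L :: "real mat"
  assumes L: "L \<in> carrier_mat n n"
    and sym: "\<And>i j. i < n \<Longrightarrow> j < n \<Longrightarrow> L $$ (i,j) = L $$ (j,i)"
    and i: "i < n"
    and P: "\<And>v. v \<in> carrier_vec n \<Longrightarrow> char_matrix (map_mat complex_of_real L) 1 *\<^sub>v v = 0\<^sub>v n
              \<Longrightarrow> v $ i = 0 \<Longrightarrow> v = 0\<^sub>v n"
  shows "Polynomial.order 1 (char_poly L) \<le> 1"
proof (rule ccontr)
  assume "\<not> ?thesis"
  hence ord: "Polynomial.order 1 (char_poly L) \<ge> 2" by simp
  define Lc where "Lc = map_mat complex_of_real L"
  define M where "M = char_matrix Lc 1"
  have Lc: "Lc \<in> carrier_mat n n" unfolding Lc_def using L by simp
  have M: "M \<in> carrier_mat n n" unfolding M_def using Lc by simp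
  have Ment: "M $$ (i,j) = complex_of_real (L $$ (i,j)) - (if i = j then 1 else 0)" if "i < n" "j < n" for i j
    using that L unfolding M_def Lc_def char_matrix_def by auto
  have cp: "char_poly Lc = map_poly of_real (char_poly L)"
    unfolding Lc_def using of_real_hom.char_poly_hom[OF L] by simp
  have ordc: "Polynomial.order 1 (char_poly Lc) \<ge> 2"
    using ord unfolding cp order_of_real .
  from char_poly_factorized[OF Lc] obtain as where "char_poly Lc = (\<Prod>a\<leftarrow>as. [:- a, 1:])" by auto
  from jordan_nf_exists[OF Lc this] obtain n_as where jnf: "jordan_nf Lc n_as" ..
  have "2 \<le> min 2 (sum_list (map fst (filter (\<lambda> na. snd na = 1) n_as)))"
    using ordc unfolding jordan_nf_order[OF jnf] by simp
  also have "\<dots> \<le> dim_gen_eigenspace Lc 1 2"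
    unfolding dim_gen_eigenspace[OF jnf]
    using sum_min2[of "map fst (filter (\<lambda> na. snd na = 1) n_as)"]
    by (simp add: case_prod_beta' o_def cong: filter_cong)
  finally have dg: "2 \<le> kernel_dim (M ^\<^sub>m 2)" unfolding dim_gen_eigenspace_def M_def .
  have "mat_kernel (M ^\<^sub>m 2) = mat_kernel M"
  proof
    show "mat_kernel M \<subseteq> mat_kernel (M ^\<^sub>m 2)"
      using mat_kernel_mult_subset[OF M M] M by (simp add: numeral_2_eq_2)
    show "mat_kernel (M ^\<^sub>m 2) \<subseteq> mat_kernel M"
    proof
      fix v assume "v \<in> mat_kernel (M ^\<^sub>m 2)"
      hence v: "v \<in> carrier_vec n" and z: "(M * M) *\<^sub>v v = 0\<^sub>v n"
        using M by (auto simp: mat_kernel_def numeral_2_eq_2)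
      have "M *\<^sub>v (M *\<^sub>v v) = 0\<^sub>v n" using z M v by (simp add: assoc_mult_mat_vec)
      from herm_kernel[OF M _ _ v this] have "M *\<^sub>v v = 0\<^sub>v n"
        using sym by (auto simp: Ment)
      thus "v \<in> mat_kernel M" using M v by (auto intro: mat_kernelI)
    qed
  qed
  hence kd: "2 \<le> kernel_dim M" using dg kernel_dim_cong[of "M ^\<^sub>m 2" M] M by simp
  interpret K: kernel n n M by (unfold_locales, rule M)
  have Pk: "\<And>v. v \<in> mat_kernel M \<Longrightarrow> v $ i = 0 \<Longrightarrow> v = 0\<^sub>v n"
    using P M unfolding M_def Lc_def by (auto simp: mat_kernel_def)
  obtain u where u: "u \<in> mat_kernel M" and ugen: "\<And>w. w \<in> mat_kernel M \<Longrightarrow> \<exists>c. w = c \<cdot>\<^sub>v u"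
  proof (cases "\<exists>u \<in> mat_kernel M. u $ i \<noteq> 0")
    case True
    then obtain u where u: "u \<in> mat_kernel M" "u $ i \<noteq> 0" by auto
    show ?thesis
    proof (rule that[OF u(1)])
      fix w assume w: "w \<in> mat_kernel M"
      define c where "c = w $ i / u $ i"
      have "w + (-c) \<cdot>\<^sub>v u \<in> mat_kernel M"
        using u w M by (auto simp: mat_kernel_def mult_add_distrib_mat_vec[OF M] mult_mat_vec[OF M])
      moreover have "(w + (-c) \<cdot>\<^sub>v u) $ i = 0"
        using u w i M unfolding c_def by (auto simp: mat_kernel_def)
      ultimately have "w + (-c) \<cdot>\<^sub>v u = 0\<^sub>v n" by (rule Pk)
      hence "w = c \<cdot>\<^sub>v u" using u w M
      proof (intro eq_vecI)
        fix j assume "w + - c \<cdot>\<^sub>v u = 0\<^sub>v n" and "j < dim_vec (c \<cdot>\<^sub>v u)"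
        thus "w $ j = (c \<cdot>\<^sub>v u) $ j" using u w M
          by (auto simp: mat_kernel_def dest!: arg_cong[of _ _ "\<lambda>x. x $ j"])
      qed (auto simp: mat_kernel_def)
      thus "\<exists>c. w = c \<cdot>\<^sub>v u" by blast
    qed
  next
    case False
    show ?thesis
    proof (rule that[of "0\<^sub>v n"])
      show "0\<^sub>v n \<in> mat_kernel M" using M by (auto intro: mat_kernelI)
      fix w assume "w \<in> mat_kernel M"
      with False Pk have "w = 0\<^sub>v n" by auto
      thus "\<exists>c. w = c \<cdot>\<^sub>v 0\<^sub>v n" by (intro exI[of _ 1]) auto
    qed
  qed
  have "K.Ker.span {u} = mat_kernel M"
  proof
    have "submodule class_ring (K.Ker.span {u}) K.VK"
      by (rule K.Ker.span_is_submodule) (use u in auto)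
    thus "K.Ker.span {u} \<subseteq> mat_kernel M" unfolding submodule_def by auto
    show "mat_kernel M \<subseteq> K.Ker.span {u}"
    proof
      fix w assume "w \<in> mat_kernel M"
      then obtain c where c: "w = c \<cdot>\<^sub>v u" using ugen by blast
      have sub: "submodule class_ring (K.Ker.span {u}) K.VK"
        by (rule K.Ker.span_is_submodule) (use u in auto)
      have "u \<in> K.Ker.span {u}" using K.Ker.in_own_span[of "{u}"] u by auto
      from submodule.smult_closed[OF sub _ this, of c] show "w \<in> K.Ker.span {u}"
        unfolding c by (simp add: class_ring_simps)
    qed
  qed
  from K.Ker.dim_le1I[OF this u] have "kernel_dim M \<le> 1" by simp
  with kd show False by simp
qed



lemma walk_append:
  assumes "is_walk E xs" "is_walk E ys" "E (last xs) (hd ys)"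
  shows "is_walk E (xs @ ys)"
  unfolding is_walk_def
proof (intro conjI allI impI)
  show "xs @ ys \<noteq> []" using assms unfolding is_walk_def by simp
  fix k assume k: "Suc k < length (xs @ ys)"
  consider "Suc k < length xs" | "Suc k = length xs" | "Suc k > length xs" by linarith
  thus "E ((xs @ ys) ! k) ((xs @ ys) ! Suc k)"
  proof cases
    case 1 thus ?thesis using assms by (simp add: nth_append is_walk_def)
  next
    case 2
    hence "xs ! k = last xs" using last_conv_nth[of xs] assms(1) unfolding is_walk_def
      by (metis diff_Suc_1)
    moreover have "ys ! 0 = hd ys" using assms(2) by (simp add: is_walk_def hd_conv_nth)
    ultimately show ?thesis using 2 assms by (simp add: nth_append)
  next
    case 3
    then obtain m where m: "k = length xs + m" by (metis less_Suc_eq_le le_Suc_ex)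
    have "E (ys ! m) (ys ! Suc m)" using assms(2) k unfolding is_walk_def m by simp
    thus ?thesis using m by (simp add: nth_append)
  qed
qed

lemma walk_rev:
  assumes sym: "\<And>a b. E a b \<Longrightarrow> E b a" and w: "is_walk E xs"
  shows "is_walk E (rev xs)"
  unfolding is_walk_def
proof (intro conjI allI impI)
  show "rev xs \<noteq> []" using w unfolding is_walk_def by simp
  fix k assume k: "Suc k < length (rev xs)"
  have "E (xs ! (length xs - Suc (Suc k))) (xs ! Suc (length xs - Suc (Suc k)))"
    using w k unfolding is_walk_def by simp
  moreover have "Suc (length xs - Suc (Suc k)) = length xs - Suc k" using k by simp
  ultimately show "E (rev xs ! k) (rev xs ! Suc k)" using k sym by (simp add: rev_nth)
qed

lemma walk_take: "is_walk E xs \<Longrightarrow> 0 < k \<Longrightarrow> is_walk E (take k xs)"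
  unfolding is_walk_def by auto

lemma walk_drop: "is_walk E xs \<Longrightarrow> k < length xs \<Longrightarrow> is_walk E (drop k xs)"
  unfolding is_walk_def by auto

lemma walk_tl: "is_walk E (x # xs) \<Longrightarrow> xs \<noteq> [] \<Longrightarrow> is_walk E xs"
  using walk_drop[of E "x#xs" 1] by simp

lemma walk_ConsD: "is_walk E (x # y # xs) \<Longrightarrow> E x y"
  unfolding is_walk_def by fastforce

lemma second_vertex:
  assumes sym: "\<And>a b. E a b \<Longrightarrow> E b a" and nocyc: "\<nexists>xs. is_cycle E xs"
    and P: "is_path E P" and Q: "is_path E Q"
    and lP: "length P \<ge> 2" and lQ: "length Q \<ge> 2"
    and h: "P ! 0 = Q ! 0" and l: "last P = last Q"
  shows "P ! 1 = Q ! 1"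
proof (rule ccontr)
  assume ne: "P ! 1 \<noteq> Q ! 1"
  have wP: "is_walk E P" and dP: "distinct P" and wQ: "is_walk E Q" and dQ: "distinct Q"
    using P Q unfolding is_path_def by auto
  define S where "S = {j. 1 \<le> j \<and> j < length Q \<and> Q ! j \<in> set P}"
  have Qne: "Q \<noteq> []" "P \<noteq> []" using lQ lP by auto
  have "Q ! (length Q - 1) \<in> set P" using last_conv_nth[OF Qne(1)] l last_in_set[OF Qne(2)] by simp
  hence "length Q - 1 \<in> S" unfolding S_def using lQ by auto
  define j where "j = (LEAST j. j \<in> S)"
  have jS: "j \<in> S" unfolding j_def by (rule LeastI, fact)
  have jmin: "\<And>l. 1 \<le> l \<Longrightarrow> l < j \<Longrightarrow> Q ! l \<notin> set P"
  proof -
    fix l assume l1: "1 \<le> l" and "l < j"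
    hence "l \<notin> S" unfolding j_def using not_less_Least by blast
    thus "Q ! l \<notin> set P" using \<open>l < j\<close> jS l1 unfolding S_def by auto
  qed
  have j1: "1 \<le> j" and jQ: "j < length Q" and jP: "Q ! j \<in> set P" using jS unfolding S_def by auto
  obtain i where i: "i < length P" and Pi: "P ! i = Q ! j" using jP by (metis in_set_conv_nth)
  have i1: "i \<ge> 1"
  proof (rule ccontr)
    assume "\<not> i \<ge> 1" hence "i = 0" by simp
    hence "Q ! j = Q ! 0" using Pi h by simp
    with dQ jQ j1 show False using nth_eq_iff_index_eq[OF dQ jQ, of 0] by fastforce
  qed
  define A where "A = take (Suc i) P"
  define B where "B = take (j - 1) (tl Q)"
  define C where "C = A @ rev B"
  have lenA: "length A = Suc i" unfolding A_def using i by simp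
  have lenB: "length B = j - 1" unfolding B_def using jQ by simp
  have Bnth: "\<And>l. l < j - 1 \<Longrightarrow> B ! l = Q ! Suc l" unfolding B_def using jQ by (simp add: nth_tl)
  have setB: "\<And>x. x \<in> set B \<Longrightarrow> x \<notin> set P"
  proof -
    fix x assume "x \<in> set B"
    then obtain l where "l < j - 1" "x = B ! l" using lenB by (metis in_set_conv_nth)
    thus "x \<notin> set P" using Bnth jmin by simp
  qed
  have wA: "is_walk E A" unfolding A_def by (rule walk_take[OF wP], simp)
  have hdC: "hd C = P ! 0" unfolding C_def A_def using i Qne by (cases P) auto
  have cyc: "is_cycle E C"
  proof (cases "j = 1")
    case True
    hence C: "C = A" unfolding C_def B_def by simp
    have i2: "i \<ge> 2"
    proof (rule ccontr)
      assume "\<not> i \<ge> 2" hence "i = 1" using i1 by simp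
      thus False using Pi True ne by simp
    qed
    have lastA: "last A = P ! i" unfolding A_def using i by (subst last_conv_nth) auto
    show ?thesis unfolding is_cycle_def is_path_def C
    proof (intro conjI)
      show "is_walk E A" by fact
      show "distinct A" unfolding A_def using dP by simp
      show "3 \<le> length A" using lenA i2 by simp
      have "E (Q ! 0) (Q ! 1)" using wQ lQ unfolding is_walk_def by auto
      thus "E (last A) (hd A)" using lastA Pi True hdC C h sym by simp
    qed
  next
    case False
    hence j2: "j \<ge> 2" using j1 by simp
    have Bne: "B \<noteq> []" using lenB j2 by auto
    have "is_walk E (drop 1 Q)" by (rule walk_drop[OF wQ]) (use lQ in simp)
    hence "is_walk E (tl Q)" by (simp add: drop_Suc)
    hence wB: "is_walk E B" unfolding B_def by (rule walk_take) (use j2 in simp)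
    have lastB: "last B = Q ! (j - 1)" using lenB Bnth j2 Bne
      by (simp add: last_conv_nth) (metis Suc_diff_Suc Suc_le_lessD diff_Suc_1 lessI numeral_2_eq_2)
    have hdB: "hd B = Q ! 1" using Bnth j2 Bne by (simp add: hd_conv_nth)
    have lastA: "last A = P ! i" unfolding A_def using i by (subst last_conv_nth) auto
    show ?thesis unfolding is_cycle_def is_path_def
    proof (intro conjI)
      have "E (Q ! (j - 1)) (Q ! Suc (j - 1))" using wQ jQ j2 unfolding is_walk_def
        by (metis Suc_diff_1 dual_order.strict_trans1 less_2_cases_iff less_Suc_eq)
      hence "E (last A) (hd (rev B))" using lastA lastB Bne Pi j2 sym by (simp add: hd_rev)
      thus "is_walk E C" unfolding C_def using walk_append[OF wA walk_rev[OF sym wB]] by blast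
      have "distinct B" unfolding B_def using dQ by (simp add: distinct_tl)
      moreover have "set A \<inter> set B = {}" using setB unfolding A_def by (meson disjoint_iff in_set_takeD)
      ultimately show "distinct C" unfolding C_def A_def using dP by simp
      show "3 \<le> length C" unfolding C_def using lenA lenB i1 j2 by simp
      have "E (Q ! 0) (Q ! 1)" using wQ lQ unfolding is_walk_def by auto
      moreover have "last C = hd B" unfolding C_def using Bne by (simp add: last_rev)
      ultimately show "E (last C) (hd C)" using hdC Bne hdB h sym by simp
    qed
  qed
  with nocyc show False by blast
qed

lemma path_tl: "is_path E (x # xs) \<Longrightarrow> xs \<noteq> [] \<Longrightarrow> is_path E xs"
  unfolding is_path_def using walk_tl by auto

lemma path_unique:
  assumes sym: "\<And>a b. E a b \<Longrightarrow> E b a" and nocyc: "\<nexists>xs. is_cycle E xs"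
  shows "is_path E P \<Longrightarrow> is_path E Q \<Longrightarrow> hd P = hd Q \<Longrightarrow> last P = last Q \<Longrightarrow> P = Q"
proof (induct P arbitrary: Q)
  case Nil thus ?case by (simp add: is_path_def is_walk_def)
next
  case (Cons a P')
  obtain Q' where Q: "Q = a # Q'" using Cons.prems by (cases Q) (auto simp: is_path_def is_walk_def)
  have dP: "a \<notin> set P'" and dQ: "a \<notin> set Q'" using Cons.prems Q by (auto simp: is_path_def)
  show ?case
  proof (cases "P' = []")
    case True
    show ?thesis
    proof (cases "Q' = []")
      case False
      hence "last Q = last Q'" unfolding Q by simp
      moreover have "last Q' \<in> set Q'" using False by simp
      ultimately show ?thesis using Cons.prems True dQ by simp
    qed (use True Q in simp)
  next
    case False
    have Q'ne: "Q' \<noteq> []"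
    proof
      assume "Q' = []"
      hence "last P' = a" using Cons.prems Q False by simp
      thus False using dP False last_in_set by metis
    qed
    have "(a # P') ! 1 = Q ! 1"
      by (rule second_vertex[OF sym nocyc Cons.prems(1,2)], insert False Q'ne Q Cons.prems, auto simp: Suc_le_eq)
    hence hd: "hd P' = hd Q'" using False Q'ne Q by (simp add: hd_conv_nth)
    have "P' = Q'"
      by (rule Cons.hyps[OF path_tl[OF Cons.prems(1) False]], insert Q'ne Q Cons.prems path_tl hd False, auto)
    thus ?thesis using Q by simp
  qed
qed

lemma dist_path:
  assumes sym: "\<And>a b. E a b \<Longrightarrow> E b a" and nocyc: "\<nexists>xs. is_cycle E xs"
    and P: "is_path E P" and hP: "hd P = x" and lP: "last P = y"
  shows "dist_graph E x y = length P - 1"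
proof -
  let ?Q = "\<lambda>k. \<exists>xs. is_walk E xs \<and> hd xs = x \<and> last xs = y \<and> length xs = Suc k"
  have Pne: "P \<noteq> []" using P by (simp add: is_path_def is_walk_def)
  have QP: "?Q (length P - 1)" using P hP lP Pne by (intro exI[of _ P]) (auto simp: is_path_def)
  define k where "k = (LEAST k. ?Q k)"
  have dk: "dist_graph E x y = k" unfolding dist_graph_def k_def ..
  have "?Q k" unfolding k_def by (rule LeastI, fact)
  then obtain W where W: "is_walk E W" "hd W = x" "last W = y" "length W = Suc k" by blast
  have kmin: "\<And>k'. ?Q k' \<Longrightarrow> k \<le> k'" unfolding k_def by (rule Least_le)
  have "distinct W"
  proof (rule ccontr)
    assume "\<not> distinct W"
    then obtain i j where ij: "i < j" "j < length W" "W ! i = W ! j"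
      by (metis distinct_conv_nth linorder_neqE_nat)
    define W' where "W' = take i W @ drop j W"
    have dne: "drop j W \<noteq> []" using ij by simp
    have hdd: "hd (drop j W) = W ! j" using ij by (simp add: hd_drop_conv_nth)
    have wd: "is_walk E (drop j W)" by (rule walk_drop[OF W(1) ij(2)])
    have wW': "is_walk E W'"
    proof (cases "i = 0")
      case True thus ?thesis unfolding W'_def using wd by simp
    next
      case False
      have "Suc (i - 1) < length W" using ij False by simp
      hence "E (W ! (i - 1)) (W ! Suc (i - 1))" using W(1) unfolding is_walk_def by blast
      hence "E (last (take i W)) (hd (drop j W))" using False ij hdd
        by (subst last_conv_nth) auto
      thus ?thesis unfolding W'_def by (rule walk_append[OF walk_take[OF W(1)] wd, rotated]) (use False in simp)
    qed
    have "hd W' = x"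
    proof (cases "i = 0")
      case True thus ?thesis unfolding W'_def using hdd ij W(2) W(1)
        by (simp add: hd_conv_nth is_walk_def)
    next
      case False thus ?thesis unfolding W'_def using W(2) ij by (cases W) auto
    qed
    moreover have "last W' = y" unfolding W'_def using dne W(3) by simp
    moreover have lW': "length W' = Suc (length W' - 1)" using dne unfolding W'_def by simp
    ultimately have "?Q (length W' - 1)" using wW' by blast
    hence "k \<le> length W' - 1" by (rule kmin)
    moreover have "length W' < length W" unfolding W'_def using ij by simp
    ultimately show False using W(4) lW' by simp
  qed
  hence "is_path E W" using W by (simp add: is_path_def)
  hence "W = P" using path_unique[OF sym nocyc _ P] W hP lP by simp
  thus ?thesis using dk W(4) by simp
qed



definition nbs :: "nat \<Rightarrow> (nat \<Rightarrow> nat \<Rightarrow> bool) \<Rightarrow> nat \<Rightarrow> nat set" where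
  "nbs n E i = {j. j < n \<and> E i j}"

fun sq :: "nat \<Rightarrow> int" where
  "sq 0 = 1" | "sq (Suc 0) = 0" | "sq (Suc (Suc j)) = sq (Suc j) - sq j"

lemma sq3: "sq (j + 3) = - sq j"
  by (simp add: numeral_3_eq_3)

lemma sq_zero: "sq j = 0 \<longleftrightarrow> j mod 3 = 1"
proof (induct j rule: less_induct)
  case (less j)
  show ?case
  proof (cases "j < 3")
    case True
    then consider "j = 0" | "j = 1" | "j = 2" by linarith
    thus ?thesis by cases (simp_all add: numeral_2_eq_2)
  next
    case False
    then obtain k where k: "j = k + 3" by (metis add.commute le_Suc_ex not_less)
    have "sq j = - sq k" using sq3 k by simp
    moreover have "j mod 3 = k mod 3" using k by simp
    ultimately show ?thesis using less[of k] k by simp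
  qed
qed

lemma sq_consec: "sq j \<noteq> 0 \<or> sq (Suc j) \<noteq> 0"
  using sq_zero[of j] sq_zero[of "Suc j"] by (simp add: mod_Suc)

definition arm :: "nat \<Rightarrow> (nat \<Rightarrow> nat \<Rightarrow> bool) \<Rightarrow> nat list \<Rightarrow> bool" where
  "arm n E P \<longleftrightarrow> length P \<ge> 2 \<and> distinct P \<and> set P \<subseteq> {0..<n} \<and> nbs n E (P ! 0) = {P ! 1}
     \<and> (\<forall>j. 0 < j \<longrightarrow> Suc j < length P \<longrightarrow> nbs n E (P ! j) = {P ! (j - 1), P ! Suc j})"

definition mid :: "nat \<Rightarrow> (nat \<Rightarrow> nat \<Rightarrow> bool) \<Rightarrow> nat list \<Rightarrow> bool" where
  "mid n E P \<longleftrightarrow> length P \<ge> 2 \<and> distinct P \<and> set P \<subseteq> {0..<n}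
     \<and> (\<forall>j. 0 < j \<longrightarrow> Suc j < length P \<longrightarrow> nbs n E (P ! j) = {P ! (j - 1), P ! Suc j})"

definition keq :: "nat \<Rightarrow> (nat \<Rightarrow> nat \<Rightarrow> bool) \<Rightarrow> (nat \<Rightarrow> complex) \<Rightarrow> bool" where
  "keq n E x \<longleftrightarrow> (\<forall>i<n. (of_nat (card (nbs n E i)) - 1) * x i = (\<Sum>j\<in>nbs n E i. x j))"

lemma two_step:
  assumes d: "distinct P" and sub: "set P \<subseteq> {0..<n}" and k: "keq n E x"
    and j: "0 < j" "Suc j < length P" and nb: "nbs n E (P ! j) = {P ! (j - 1), P ! Suc j}"
  shows "x (P ! Suc j) = x (P ! j) - x (P ! (j - 1))"
proof -
  have ne: "P ! (j - 1) \<noteq> P ! Suc j" using d j by (simp add: nth_eq_iff_index_eq)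
  have "P ! j \<in> set P" using j by simp
  hence lt: "P ! j < n" using sub by auto
  from k lt have "(of_nat (card (nbs n E (P ! j))) - 1) * x (P ! j) = (\<Sum>i\<in>nbs n E (P ! j). x i)"
    unfolding keq_def by blast
  thus ?thesis unfolding nb using ne by (simp add: algebra_simps)
qed

lemma arm_vals:
  assumes a: "arm n E P" and k: "keq n E x"
  shows "j < length P \<Longrightarrow> x (P ! j) = x (P ! 0) * of_int (sq j)"
proof (induct j rule: less_induct)
  case (less j)
  have d: "distinct P" and sub: "set P \<subseteq> {0..<n}" and l2: "length P \<ge> 2"
    and nb0: "nbs n E (P ! 0) = {P ! 1}" using a unfolding arm_def by auto
  show ?case
  proof (cases j)
    case 0 thus ?thesis by simp
  next
    case (Suc j')
    show ?thesis
    proof (cases j')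
      case 0
      have "P ! 0 \<in> set P" using l2 by (intro nth_mem) linarith
      hence "P ! 0 < n" using sub by auto
      with k have "(of_nat (card (nbs n E (P ! 0))) - 1) * x (P ! 0) = (\<Sum>i\<in>nbs n E (P ! 0). x i)"
        unfolding keq_def by blast
      thus ?thesis unfolding nb0 using Suc 0 by simp
    next
      case (Suc j'')
      have jj: "j = Suc (Suc j'')" using Suc \<open>j = Suc j'\<close> by simp
      have nb: "nbs n E (P ! Suc j'') = {P ! (Suc j'' - 1), P ! Suc (Suc j'')}"
        using a less.prems jj unfolding arm_def by auto
      have "x (P ! Suc (Suc j'')) = x (P ! Suc j'') - x (P ! (Suc j'' - 1))"
        by (rule two_step[OF d sub k _ _ nb]) (use less.prems jj in auto)
      also have "\<dots> = x (P ! 0) * of_int (sq (Suc j'')) - x (P ! 0) * of_int (sq j'')"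
        using less.hyps[of "Suc j''"] less.hyps[of j''] less.prems jj by simp
      finally show ?thesis using jj by (simp add: algebra_simps)
    qed
  qed
qed

lemma mid_zero:
  assumes a: "mid n E P" and k: "keq n E x" and z0: "x (P ! 0) = 0" and z1: "x (P ! 1) = 0"
  shows "j < length P \<Longrightarrow> x (P ! j) = 0"
proof (induct j rule: less_induct)
  case (less j)
  have d: "distinct P" and sub: "set P \<subseteq> {0..<n}" using a unfolding mid_def by auto
  show ?case
  proof (cases j)
    case 0 thus ?thesis using z0 by simp
  next
    case (Suc j')
    show ?thesis
    proof (cases j')
      case 0 thus ?thesis using Suc z1 by simp
    next
      case (Suc j'')
      have jj: "j = Suc (Suc j'')" using Suc \<open>j = Suc j'\<close> by simp
      have nb: "nbs n E (P ! Suc j'') = {P ! (Suc j'' - 1), P ! Suc (Suc j'')}"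
        using a less.prems jj unfolding mid_def by auto
      have "x (P ! Suc (Suc j'')) = x (P ! Suc j'') - x (P ! (Suc j'' - 1))"
        by (rule two_step[OF d sub k _ _ nb]) (use less.prems jj in auto)
      thus ?thesis using less.hyps[of "Suc j''"] less.hyps[of j''] less.prems jj by simp
    qed
  qed
qed

lemma card3_distinct: "card {a, b, c} = 3 \<Longrightarrow> a \<noteq> b \<and> a \<noteq> c \<and> b \<noteq> c"
  by (auto simp: card_insert_if split: if_splits)

lemma arm_last: "arm n E P \<Longrightarrow> last P = P ! (length P - 1)"
  unfolding arm_def by (subst last_conv_nth) auto

lemma keq_at:
  assumes "keq n E x" "i < n" "nbs n E i = {a, b, c}" "card (nbs n E i) = 3"
  shows "2 * x i = x a + x b + x c"
proof -
  have d: "a \<noteq> b" "a \<noteq> c" "b \<noteq> c" using card3_distinct assms(3,4) by metis+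
  have "(of_nat (card (nbs n E i)) - 1) * x i = (\<Sum>j\<in>nbs n E i. x j)"
    using assms(1,2) unfolding keq_def by blast
  thus ?thesis using assms(4) unfolding assms(3) using d by simp
qed

lemma core:
  assumes k: "keq n E x"
    and a1: "arm n E P1" and a2: "arm n E P2" and a3: "arm n E P3" and a4: "arm n E P4"
    and mc: "mid n E Pc"
    and e1: "last P1 = Pc ! 0" and e2: "last P2 = Pc ! 0"
    and e3: "last P3 = last Pc" and e4: "last P4 = last Pc"
    and nm1: "nbs n E (Pc ! 0) = {P1 ! (length P1 - 2), P2 ! (length P2 - 2), Pc ! 1}"
    and dm1: "card (nbs n E (Pc ! 0)) = 3"
    and nm2: "nbs n E (last Pc) = {P3 ! (length P3 - 2), P4 ! (length P4 - 2), Pc ! (length Pc - 2)}"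
    and dm2: "card (nbs n E (last Pc)) = 3"
    and cover: "{0..<n} \<subseteq> set P1 \<union> set P2 \<union> set Pc \<union> set P3 \<union> set P4"
    and b: "(length P2 - 1) mod 3 \<noteq> 1"
    and de: "\<not> ((length P3 - 1) mod 3 = 1 \<and> (length P4 - 1) mod 3 = 1)"
    and z: "x (P1 ! 0) = 0"
  shows "\<forall>i<n. x i = 0"
proof -
  have l1: "length P1 \<ge> 2" and l2: "length P2 \<ge> 2" and l3: "length P3 \<ge> 2" and l4: "length P4 \<ge> 2"
    and lc: "length Pc \<ge> 2" and sc: "set Pc \<subseteq> {0..<n}"
    using a1 a2 a3 a4 mc unfolding arm_def mid_def by auto
  have v1: "\<And>j. j < length P1 \<Longrightarrow> x (P1 ! j) = 0" using arm_vals[OF a1 k] z by simp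
  have m1z: "x (Pc ! 0) = 0" using v1[of "length P1 - 1"] arm_last[OF a1] e1 l1 by simp
  have v2: "\<And>j. j < length P2 \<Longrightarrow> x (P2 ! j) = x (P2 ! 0) * of_int (sq j)" using arm_vals[OF a2 k] .
  have "x (P2 ! 0) * of_int (sq (length P2 - 1)) = 0"
    using v2[of "length P2 - 1"] arm_last[OF a2] e2 l2 m1z by simp
  moreover have "sq (length P2 - 1) \<noteq> 0" using b sq_zero by simp
  ultimately have "x (P2 ! 0) = 0" by simp
  hence v2': "\<And>j. j < length P2 \<Longrightarrow> x (P2 ! j) = 0" using v2 by simp
  have "Pc ! 0 \<in> set Pc" using lc by (intro nth_mem) linarith
  hence m1n: "Pc ! 0 < n" using sc by auto
  have "2 * x (Pc ! 0) = x (P1 ! (length P1 - 2)) + x (P2 ! (length P2 - 2)) + x (Pc ! 1)"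
    by (rule keq_at[OF k m1n nm1 dm1])
  hence c1: "x (Pc ! 1) = 0" using m1z v1[of "length P1 - 2"] v2'[of "length P2 - 2"] l1 l2 by simp
  have vc: "\<And>j. j < length Pc \<Longrightarrow> x (Pc ! j) = 0" using mid_zero[OF mc k m1z c1] .
  have "last Pc = Pc ! (length Pc - 1)" using lc by (subst last_conv_nth) auto
  hence m2z: "x (last Pc) = 0" using vc[of "length Pc - 1"] lc by simp
  have m2n: "last Pc < n" using sc lc by (metis atLeastLessThan_iff last_in_set list.size(3) not_numeral_le_zero subsetD)
  have "2 * x (last Pc) = x (P3 ! (length P3 - 2)) + x (P4 ! (length P4 - 2)) + x (Pc ! (length Pc - 2))"
    by (rule keq_at[OF k m2n nm2 dm2])
  hence eqm2: "x (P3 ! (length P3 - 2)) + x (P4 ! (length P4 - 2)) = 0"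
    using m2z vc[of "length Pc - 2"] lc by simp
  define t3 where "t3 = x (P3 ! 0)"
  define t4 where "t4 = x (P4 ! 0)"
  have v3: "\<And>j. j < length P3 \<Longrightarrow> x (P3 ! j) = t3 * of_int (sq j)" using arm_vals[OF a3 k] t3_def by simp
  have v4: "\<And>j. j < length P4 \<Longrightarrow> x (P4 ! j) = t4 * of_int (sq j)" using arm_vals[OF a4 k] t4_def by simp
  have s3: "t3 * of_int (sq (length P3 - 1)) = 0" using v3[of "length P3 - 1"] arm_last[OF a3] e3 l3 m2z by simp
  have s4: "t4 * of_int (sq (length P4 - 1)) = 0" using v4[of "length P4 - 1"] arm_last[OF a4] e4 l4 m2z by simp
  have s34: "t3 * of_int (sq (length P3 - 2)) + t4 * of_int (sq (length P4 - 2)) = 0"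
    using eqm2 v3[of "length P3 - 2"] v4[of "length P4 - 2"] l3 l4 by simp
  have suc3: "Suc (length P3 - 2) = length P3 - 1" and suc4: "Suc (length P4 - 2) = length P4 - 1"
    using l3 l4 by auto
  have t34: "t3 = 0 \<and> t4 = 0"
  proof (cases "(length P3 - 1) mod 3 = 1")
    case False
    hence "sq (length P3 - 1) \<noteq> 0" using sq_zero by simp
    hence t3: "t3 = 0" using s3 by simp
    hence "t4 * of_int (sq (length P4 - 2)) = 0" using s34 by simp
    hence "t4 = 0" using s4 sq_consec[of "length P4 - 2"] suc4 by auto
    thus ?thesis using t3 by simp
  next
    case True
    hence "(length P4 - 1) mod 3 \<noteq> 1" using de by simp
    hence "sq (length P4 - 1) \<noteq> 0" using sq_zero by simp
    hence t4: "t4 = 0" using s4 by simp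
    hence "t3 * of_int (sq (length P3 - 2)) = 0" using s34 by simp
    hence "t3 = 0" using s3 sq_consec[of "length P3 - 2"] suc3 by auto
    thus ?thesis using t4 by simp
  qed
  show ?thesis
  proof (intro allI impI)
    fix i assume "i < n"
    hence "i \<in> set P1 \<union> set P2 \<union> set Pc \<union> set P3 \<union> set P4" using cover by auto
    thus "x i = 0" using v1 v2' vc v3 v4 t34 by (auto simp: in_set_conv_nth)
  qed
qed



lemma dne: "distinct xs \<Longrightarrow> i < length xs \<Longrightarrow> j < length xs \<Longrightarrow> i \<noteq> j \<Longrightarrow> xs ! i \<noteq> xs ! j"
  by (simp add: nth_eq_iff_index_eq)

lemma sg_sym: "simple_graph n E \<Longrightarrow> E a b \<Longrightarrow> E b a"
  unfolding simple_graph_def by blast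

lemma sg_irr: "simple_graph n E \<Longrightarrow> \<not> E a a"
  unfolding simple_graph_def by blast

lemma sg_lt: "simple_graph n E \<Longrightarrow> E a b \<Longrightarrow> a < n \<and> b < n"
  unfolding simple_graph_def by blast


lemma arm_closed:
  assumes a: "arm n E P" and w: "w \<in> set P" "w \<noteq> last P" and z: "z \<in> nbs n E w"
  shows "z \<in> set P"
proof -
  have l2: "length P \<ge> 2" and nb0: "nbs n E (P ! 0) = {P ! 1}"
    and nbj: "\<And>j. 0 < j \<Longrightarrow> Suc j < length P \<Longrightarrow> nbs n E (P ! j) = {P ! (j - 1), P ! Suc j}"
    using a unfolding arm_def by auto
  obtain j where j: "j < length P" "w = P ! j" using w(1) by (auto simp: in_set_conv_nth)
  have "j \<noteq> length P - 1" using w j arm_last[OF a] by auto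
  hence j1: "Suc j < length P" using j by simp
  show ?thesis
  proof (cases "j = 0")
    case True
    hence "z = P ! 1" using z nb0 j by simp
    thus ?thesis using l2 by simp
  next
    case False
    hence "z \<in> {P ! (j - 1), P ! Suc j}" using z nbj[of j] j j1 by simp
    thus ?thesis using j j1 by auto
  qed
qed

lemma arm_pred:
  assumes a: "arm n E P" and w: "w \<in> set P" "w \<noteq> last P" and z: "last P \<in> nbs n E w"
  shows "w = P ! (length P - 2)"
proof -
  have l2: "length P \<ge> 2" and nb0: "nbs n E (P ! 0) = {P ! 1}" and d: "distinct P"
    and nbj: "\<And>j. 0 < j \<Longrightarrow> Suc j < length P \<Longrightarrow> nbs n E (P ! j) = {P ! (j - 1), P ! Suc j}"
    using a unfolding arm_def by auto
  have lst: "last P = P ! (length P - 1)" by (rule arm_last[OF a])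
  obtain j where j: "j < length P" "w = P ! j" using w(1) by (auto simp: in_set_conv_nth)
  have "j \<noteq> length P - 1" using w j lst by auto
  hence j1: "Suc j < length P" using j by simp
  show ?thesis
  proof (cases "j = 0")
    case True
    hence "P ! (length P - 1) = P ! 1" using z nb0 j lst by simp
    hence "length P - 1 = 1" using d l2 by (simp add: nth_eq_iff_index_eq)
    thus ?thesis using True j by simp
  next
    case False
    hence "P ! (length P - 1) \<in> {P ! (j - 1), P ! Suc j}" using z nbj[of j] j1 lst j by simp
    moreover have "P ! (length P - 1) \<noteq> P ! (j - 1)" using d j1 by (simp add: nth_eq_iff_index_eq)
    ultimately have "P ! (length P - 1) = P ! Suc j" by blast
    hence "length P - 1 = Suc j" using d j1 by (simp add: nth_eq_iff_index_eq)
    hence "j = length P - 2" by simp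
    thus ?thesis using j by simp
  qed
qed


lemma nbs_m:
  assumes sg: "simple_graph n E" and nocyc: "\<nexists>xs. is_cycle E xs"
    and A: "arm n E A" and B: "arm n E B" and C: "mid n E C" and Cp: "is_path E C"
    and Ap: "is_path E A" and Bp: "is_path E B"
    and D: "arm n E D" and F: "arm n E F"
    and eA: "last A = C ! 0" and eB: "last B = C ! 0" and eD: "last D = last C" and eF: "last F = last C"
    and iAB: "set A \<inter> set B = {C ! 0}" and iAC: "set A \<inter> set C = {C ! 0}" and iBC: "set B \<inter> set C = {C ! 0}"
    and iDC: "set D \<inter> set C = {last C}" and iFC: "set F \<inter> set C = {last C}"
    and cover: "{0..<n} \<subseteq> set A \<union> set B \<union> set C \<union> set D \<union> set F"
  shows "nbs n E (C ! 0) = {A ! (length A - 2), B ! (length B - 2), C ! 1}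
     \<and> card (nbs n E (C ! 0)) = 3"
proof -
  let ?m = "C ! 0"
  have lA: "length A \<ge> 2" and dA: "distinct A" and lB: "length B \<ge> 2" and dB: "distinct B"
    and lC: "length C \<ge> 2" and dC: "distinct C" and sC: "set C \<subseteq> {0..<n}"
    and sA: "set A \<subseteq> {0..<n}" and sB: "set B \<subseteq> {0..<n}"
    and nbC: "\<And>j. 0 < j \<Longrightarrow> Suc j < length C \<Longrightarrow> nbs n E (C ! j) = {C ! (j - 1), C ! Suc j}"
    using A B C unfolding arm_def mid_def by auto
  have lstC: "last C = C ! (length C - 1)" using lC by (subst last_conv_nth) auto
  have mneq: "?m \<noteq> last C" unfolding lstC by (rule dne[OF dC]) (use lC in auto)
  have wC: "is_walk E C" using Cp by (simp add: is_path_def)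
  have Ea: "\<And>j. Suc j < length C \<Longrightarrow> E (C ! j) (C ! Suc j)" using wC unfolding is_walk_def by blast
  define a where "a = A ! (length A - 2)"
  define b where "b = B ! (length B - 2)"
  define c where "c = C ! 1"
  have aA: "a \<in> set A" and bB: "b \<in> set B" and cC: "c \<in> set C" using lA lB lC unfolding a_def b_def c_def by auto
  have am: "a \<noteq> ?m" unfolding a_def eA[symmetric] arm_last[OF A] by (rule dne[OF dA]) (use lA in auto)
  have bm: "b \<noteq> ?m" unfolding b_def eB[symmetric] arm_last[OF B] by (rule dne[OF dB]) (use lB in auto)
  have cm: "c \<noteq> ?m" unfolding c_def by (rule dne[OF dC]) (use lC in auto)
  have ab: "a \<noteq> b" using aA bB iAB am by auto
  have ac: "a \<noteq> c" using aA cC iAC am by auto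
  have bc: "b \<noteq> c" using bB cC iBC bm by auto
  have edgeA: "E a ?m"
  proof -
    have "Suc (length A - 2) < length A" using lA by simp
    hence "E (A ! (length A - 2)) (A ! Suc (length A - 2))" using Ap unfolding is_path_def is_walk_def by blast
    moreover have "Suc (length A - 2) = length A - 1" using lA by simp
    ultimately show ?thesis unfolding a_def using eA arm_last[OF A] by simp
  qed
  have edgeB: "E b ?m"
  proof -
    have "Suc (length B - 2) < length B" using lB by simp
    hence "E (B ! (length B - 2)) (B ! Suc (length B - 2))" using Bp unfolding is_path_def is_walk_def by blast
    moreover have "Suc (length B - 2) = length B - 1" using lB by simp
    ultimately show ?thesis unfolding b_def using eB arm_last[OF B] by simp
  qed
  have edgeC: "E ?m c" unfolding c_def using Ea[of 0] lC by simp
  have mn: "?m < n" using sg_lt[OF sg edgeC] by simp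
  have sup: "{a, b, c} \<subseteq> nbs n E ?m" unfolding nbs_def
    using edgeA edgeB edgeC sg_sym[OF sg] sg_lt[OF sg] by blast
  have sub: "nbs n E ?m \<subseteq> {a, b, c}"
  proof
    fix w assume w: "w \<in> nbs n E ?m"
    hence wn: "w < n" and Emw: "E ?m w" unfolding nbs_def by auto
    have mw: "?m \<in> nbs n E w" unfolding nbs_def using mn Emw sg_sym[OF sg] by auto
    have wm: "w \<noteq> ?m" using Emw sg_irr[OF sg] by auto
    show "w \<in> {a, b, c}"
    proof (cases "w \<in> set C")
      case True
      then obtain j where j: "j < length C" "w = C ! j" by (auto simp: in_set_conv_nth)
      have j0: "j \<noteq> 0" using j wm by (cases j) auto
      show ?thesis
      proof (cases "Suc j < length C")
        case True
        hence "C ! 0 \<in> {C ! (j - 1), C ! Suc j}" using nbC[of j] j0 mw j by auto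
        moreover have "C ! 0 \<noteq> C ! Suc j" by (rule dne[OF dC]) (use True in auto)
        ultimately have "C ! 0 = C ! (j - 1)" by blast
        hence "j - 1 = 0" using dne[OF dC, of 0 "j - 1"] j by fastforce
        hence "j = 1" using j0 by simp
        thus ?thesis using j unfolding c_def by simp
      next
        case False
        hence jl: "j = length C - 1" using j by simp
        have "length C = 2"
        proof (rule ccontr)
          assume "length C \<noteq> 2"
          hence "3 \<le> length C" using lC by simp
          moreover have "E (last C) (hd C)"
            using Emw sg_sym[OF sg] jl j lstC lC hd_conv_nth[of C] by fastforce
          ultimately have "is_cycle E C" using Cp unfolding is_cycle_def by simp
          thus False using nocyc by blast
        qed
        thus ?thesis using j jl unfolding c_def by simp
      qed
    next
      case notC: False
      hence "w \<in> set A \<union> set B \<union> set D \<union> set F" using cover wn by auto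
      moreover {
        assume "w \<in> set A"
        hence "w = a" unfolding a_def using arm_pred[OF A] wm eA mw by simp
      }
      moreover {
        assume "w \<in> set B"
        hence "w = b" unfolding b_def using arm_pred[OF B] wm eB mw by simp
      }
      moreover {
        assume wD: "w \<in> set D"
        have "last C \<in> set C" using lC by (intro last_in_set) auto
        hence "w \<noteq> last D" using notC eD by auto
        hence "?m \<in> set D" using arm_closed[OF D wD] mw by blast
        moreover have "?m \<in> set C" using lC by (intro nth_mem) linarith
        ultimately have False using iDC mneq by auto
      }
      moreover {
        assume wF: "w \<in> set F"
        have "last C \<in> set C" using lC by (intro last_in_set) auto
        hence "w \<noteq> last F" using notC eF by auto
        hence "?m \<in> set F" using arm_closed[OF F wF] mw by blast
        moreover have "?m \<in> set C" using lC by (intro nth_mem) linarith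
        ultimately have False using iFC mneq by auto
      }
      ultimately show ?thesis by blast
    qed
  qed
  have eq: "nbs n E ?m = {a, b, c}" using sup sub by blast
  have "card {a, b, c} = 3" using ab ac bc by simp
  thus ?thesis using eq unfolding a_def b_def c_def by simp
qed


lemma nbs_finite: "finite (nbs n E i)" unfolding nbs_def by simp

lemma degree_nbs: "degree n E i = card (nbs n E i)" unfolding degree_def nbs_def ..

lemma nb_interior:
  assumes sg: "simple_graph n E" and P: "is_path E P" and j: "0 < j" "Suc j < length P"
    and deg: "degree n E (P ! j) < 3"
  shows "nbs n E (P ! j) = {P ! (j - 1), P ! Suc j}"
proof -
  have w: "is_walk E P" and d: "distinct P" using P unfolding is_path_def by auto
  have e1: "E (P ! (j - 1)) (P ! j)" using w j unfolding is_walk_def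
    by (metis Suc_pred' Suc_lessD)
  have e2: "E (P ! j) (P ! Suc j)" using w j unfolding is_walk_def by blast
  have sub: "{P ! (j - 1), P ! Suc j} \<subseteq> nbs n E (P ! j)" unfolding nbs_def
    using e1 e2 sg_sym[OF sg] sg_lt[OF sg] by blast
  have ne: "P ! (j - 1) \<noteq> P ! Suc j" by (rule dne[OF d]) (use j in auto)
  have "card (nbs n E (P ! j)) \<le> card {P ! (j - 1), P ! Suc j}" using deg ne degree_nbs by simp
  thus ?thesis using card_seteq[OF nbs_finite sub] by simp
qed

lemma nb_first:
  assumes sg: "simple_graph n E" and P: "is_path E P" and l: "length P \<ge> 2"
    and deg: "degree n E (P ! 0) = 1"
  shows "nbs n E (P ! 0) = {P ! 1}"
proof -
  have w: "is_walk E P" using P unfolding is_path_def by auto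
  have e2: "E (P ! 0) (P ! 1)" using w l unfolding is_walk_def by auto
  have sub: "{P ! 1} \<subseteq> nbs n E (P ! 0)" unfolding nbs_def using e2 sg_lt[OF sg] by blast
  have "card (nbs n E (P ! 0)) \<le> card {P ! 1}" using deg degree_nbs by simp
  thus ?thesis using card_seteq[OF nbs_finite sub] by simp
qed

lemma path_lt:
  assumes sg: "simple_graph n E" and w: "is_walk E P" and l: "length P \<ge> 2"
  shows "set P \<subseteq> {0..<n}"
proof
  fix v assume "v \<in> set P"
  then obtain j where j: "j < length P" "v = P ! j" by (auto simp: in_set_conv_nth)
  show "v \<in> {0..<n}"
  proof (cases "Suc j < length P")
    case True
    hence "E (P ! j) (P ! Suc j)" using w unfolding is_walk_def by blast
    thus ?thesis using sg_lt[OF sg] j by auto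
  next
    case False
    hence "Suc (j - 1) < length P" "Suc (j - 1) = j" using j l by auto
    hence "E (P ! (j - 1)) (P ! j)" using w unfolding is_walk_def by metis
    thus ?thesis using sg_lt[OF sg] j by auto
  qed
qed

lemma pv_set:
  assumes sg: "simple_graph n E" and nocyc: "\<nexists>xs. is_cycle E xs"
    and P: "is_path E P" "hd P = r" "last P = s"
  shows "path_verts E r s = set P"
proof -
  have "\<And>Q. is_path E Q \<Longrightarrow> hd Q = r \<Longrightarrow> last Q = s \<Longrightarrow> Q = P"
    using path_unique[OF sg_sym[OF sg] nocyc] P by metis
  thus ?thesis unfolding path_verts_def using P by blast
qed

lemma mid_rev:
  assumes "mid n E C" shows "mid n E (rev C)"
proof -
  have l: "length C \<ge> 2" and d: "distinct C" and s: "set C \<subseteq> {0..<n}"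
    and nb: "\<And>j. 0 < j \<Longrightarrow> Suc j < length C \<Longrightarrow> nbs n E (C ! j) = {C ! (j - 1), C ! Suc j}"
    using assms unfolding mid_def by auto
  have "nbs n E (rev C ! j) = {rev C ! (j - 1), rev C ! Suc j}" if j: "0 < j" "Suc j < length C" for j
  proof -
    define k where "k = length C - Suc j"
    have k: "0 < k" "Suc k < length C" using j unfolding k_def by auto
    have "rev C ! j = C ! k" using j unfolding k_def by (simp add: rev_nth)
    moreover have "rev C ! (j - 1) = C ! Suc k" using j unfolding k_def
      by (simp add: rev_nth Suc_diff_Suc)
    moreover have "rev C ! Suc j = C ! (k - 1)" using j unfolding k_def
      by (simp add: rev_nth)
    ultimately show ?thesis using nb[OF k] by auto
  qed
  thus ?thesis using l d s unfolding mid_def by simp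
qed



lemma keq_of_kernel:
  assumes sg: "simple_graph n E" and v: "v \<in> carrier_vec n"
    and z: "char_matrix (map_mat complex_of_real (laplacian n E)) 1 *\<^sub>v v = 0\<^sub>v n"
  shows "keq n E (\<lambda>i. v $ i)"
  unfolding keq_def
proof (intro allI impI)
  fix i assume i: "i < n"
  let ?M = "char_matrix (map_mat complex_of_real (laplacian n E)) 1"
  have Ment: "?M $$ (i, j) = (if i = j then of_nat (degree n E i) - 1 else if E i j then -1 else 0)"
    if "j < n" for j
    using that i unfolding char_matrix_def laplacian_def by auto
  have "0 = (?M *\<^sub>v v) $ i" using z i by simp
  also have "\<dots> = (\<Sum>j = 0..<n. ?M $$ (i, j) * v $ j)"
    using i v unfolding laplacian_def char_matrix_def
    by (simp add: scalar_prod_def eq_commute[of _ i] cong: if_cong)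
  also have "\<dots> = (\<Sum>j = 0..<n. (if j = i then (of_nat (degree n E i) - 1) * v $ i else 0)
                    + (if E i j then - v $ j else 0))"
    by (rule sum.cong[OF refl]) (use sg_irr[OF sg] in \<open>auto simp: Ment\<close>)
  also have "\<dots> = (of_nat (degree n E i) - 1) * v $ i + (\<Sum>j \<in> nbs n E i. - v $ j)"
    unfolding sum.distrib using i
    by (simp add: sum.If_cases nbs_def Int_def conj_commute)
  finally show "(of_nat (card (nbs n E i)) - 1) * v $ i = (\<Sum>j\<in>nbs n E i. v $ j)"
    unfolding degree_nbs by (simp add: sum_negf algebra_simps eq_neg_iff_add_eq_0)
qed

lemma path_len2: "is_path E P \<Longrightarrow> hd P \<noteq> last P \<Longrightarrow> length P \<ge> 2"
  by (cases P; cases "tl P") (auto simp: is_path_def is_walk_def)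

lemma interior_facts:
  assumes P: "is_path E P" and j: "0 < j" "Suc j < length P"
  shows "P ! j \<noteq> last P \<and> P ! j \<noteq> hd P \<and> P ! j \<in> set P"
proof -
  have d: "distinct P" using P by (simp add: is_path_def)
  have ne: "P \<noteq> []" using j by auto
  have "P ! j \<noteq> P ! (length P - 1)" by (rule dne[OF d]) (use j in auto)
  moreover have "P ! j \<noteq> P ! 0" by (rule dne[OF d]) (use j in auto)
  ultimately show ?thesis using ne j by (simp add: last_conv_nth hd_conv_nth)
qed

lemma arm_intro:
  assumes sg: "simple_graph n E" and P: "is_path E P" and l: "length P \<ge> 2"
    and d0: "degree n E (hd P) = 1"
    and dj: "\<And>j. 0 < j \<Longrightarrow> Suc j < length P \<Longrightarrow> degree n E (P ! j) < 3"
  shows "arm n E P"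
  unfolding arm_def
proof (intro conjI allI impI)
  show "2 \<le> length P" by fact
  show "distinct P" using P by (simp add: is_path_def)
  show "set P \<subseteq> {0..<n}" using path_lt[OF sg _ l] P by (simp add: is_path_def)
  show "nbs n E (P ! 0) = {P ! 1}" using nb_first[OF sg P l] d0 l hd_conv_nth[of P] by fastforce
  fix j assume "0 < j" "Suc j < length P"
  thus "nbs n E (P ! j) = {P ! (j - 1), P ! Suc j}" using nb_interior[OF sg P] dj by blast
qed

lemma mid_intro:
  assumes sg: "simple_graph n E" and P: "is_path E P" and l: "length P \<ge> 2"
    and dj: "\<And>j. 0 < j \<Longrightarrow> Suc j < length P \<Longrightarrow> degree n E (P ! j) < 3"
  shows "mid n E P"
  unfolding mid_def
proof (intro conjI allI impI)
  show "2 \<le> length P" by fact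
  show "distinct P" using P by (simp add: is_path_def)
  show "set P \<subseteq> {0..<n}" using path_lt[OF sg _ l] P by (simp add: is_path_def)
  fix j assume "0 < j" "Suc j < length P"
  thus "nbs n E (P ! j) = {P ! (j - 1), P ! Suc j}" using nb_interior[OF sg P] dj by blast
qed

theorem mainTheorem13:
  fixes n :: nat and E :: "nat \<Rightarrow> nat \<Rightarrow> bool" and u1 u2 u3 u4 m1 m2 :: nat
  assumes tree: "is_tree n E"
    and pend: "{v. pendant n E v} = {u1, u2, u3, u4}"
    and udist: "distinct [u1, u2, u3, u4]"
    and maj: "{v. major n E v} = {m1, m2}"
    and mdist: "m1 \<noteq> m2"
    and union: "{0..<n} = path_verts E u1 m1 \<union> path_verts E u2 m1 \<union> path_verts E m1 m2
                  \<union> path_verts E u3 m2 \<union> path_verts E u4 m2"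
    and g12: "path_verts E u1 m1 \<inter> path_verts E u2 m1 = {m1}"
    and g1c: "path_verts E u1 m1 \<inter> path_verts E m1 m2 = {m1}"
    and g2c: "path_verts E u2 m1 \<inter> path_verts E m1 m2 = {m1}"
    and g34: "path_verts E u3 m2 \<inter> path_verts E u4 m2 = {m2}"
    and g3c: "path_verts E u3 m2 \<inter> path_verts E m1 m2 = {m2}"
    and g4c: "path_verts E u4 m2 \<inter> path_verts E m1 m2 = {m2}"
    and d13: "path_verts E u1 m1 \<inter> path_verts E u3 m2 = {}"
    and d14: "path_verts E u1 m1 \<inter> path_verts E u4 m2 = {}"
    and d23: "path_verts E u2 m1 \<inter> path_verts E u3 m2 = {}"
    and d24: "path_verts E u2 m1 \<inter> path_verts E u4 m2 = {}"
    and mult: "lap_mult n E 1 \<ge> 2"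
  shows "(dist_graph E u1 m1 mod 3 = 1 \<and> dist_graph E u2 m1 mod 3 = 1)
       \<or> (dist_graph E u3 m2 mod 3 = 1 \<and> dist_graph E u4 m2 mod 3 = 1)"
proof -
  have sg: "simple_graph n E" and nocyc: "\<nexists>xs. is_cycle E xs" using tree unfolding is_tree_def by auto
  note sym = sg_sym[OF sg]
  have pu: "pendant n E u" if "u \<in> {u1, u2, u3, u4}" for u using pend that by blast
  have mu: "major n E m" if "m \<in> {m1, m2}" for m using maj that by blast
  have nonmaj: "degree n E v < 3" if "v < n" "v \<noteq> m1" "v \<noteq> m2" for v
  proof -
    have "\<not> major n E v" using maj that by blast
    thus ?thesis using that unfolding major_def by simp
  qed
  have du: "degree n E u = 1" if "u \<in> {u1, u2, u3, u4}" for u using pu[OF that] unfolding pendant_def by simp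
  have dm: "degree n E m \<ge> 3" if "m \<in> {m1, m2}" for m using mu[OF that] unfolding major_def by simp
  have um: "u \<noteq> m" if "u \<in> {u1, u2, u3, u4}" "m \<in> {m1, m2}" for u m
    using du[OF that(1)] dm[OF that(2)] by auto
  have getp: "\<exists>P. is_path E P \<and> hd P = r \<and> last P = s" if "z \<in> path_verts E r s" for z r s
    using that unfolding path_verts_def by blast
  obtain P1 where P1: "is_path E P1" "hd P1 = u1" "last P1 = m1" using getp[of m1 u1 m1] g12 by blast
  obtain P2 where P2: "is_path E P2" "hd P2 = u2" "last P2 = m1" using getp[of m1 u2 m1] g12 by blast
  obtain Pc where Pc: "is_path E Pc" "hd Pc = m1" "last Pc = m2" using getp[of m1 m1 m2] g1c by blast
  obtain P3 where P3: "is_path E P3" "hd P3 = u3" "last P3 = m2" using getp[of m2 u3 m2] g34 by blast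
  obtain P4 where P4: "is_path E P4" "hd P4 = u4" "last P4 = m2" using getp[of m2 u4 m2] g34 by blast
  have S1: "path_verts E u1 m1 = set P1" by (rule pv_set[OF sg nocyc P1])
  have S2: "path_verts E u2 m1 = set P2" by (rule pv_set[OF sg nocyc P2])
  have Sc: "path_verts E m1 m2 = set Pc" by (rule pv_set[OF sg nocyc Pc])
  have S3: "path_verts E u3 m2 = set P3" by (rule pv_set[OF sg nocyc P3])
  have S4: "path_verts E u4 m2 = set P4" by (rule pv_set[OF sg nocyc P4])
  note SS = S1 S2 Sc S3 S4
  have l1: "length P1 \<ge> 2" using path_len2[OF P1(1)] P1 um[of u1 m1] by simp
  have l2: "length P2 \<ge> 2" using path_len2[OF P2(1)] P2 um[of u2 m1] by simp
  have lc: "length Pc \<ge> 2" using path_len2[OF Pc(1)] Pc mdist by simp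
  have l3: "length P3 \<ge> 2" using path_len2[OF P3(1)] P3 um[of u3 m2] by simp
  have l4: "length P4 \<ge> 2" using path_len2[OF P4(1)] P4 um[of u4 m2] by simp
  have m1c: "m1 \<in> set Pc" using Pc lc hd_in_set[of Pc] by fastforce
  have m2c: "m2 \<in> set Pc" using Pc lc last_in_set[of Pc] by fastforce
  have lt: "set P \<subseteq> {0..<n}" if "is_path E P" "length P \<ge> 2" for P
    using path_lt[OF sg _ that(2)] that(1) by (simp add: is_path_def)
  have A1: "arm n E P1"
  proof (rule arm_intro[OF sg P1(1) l1])
    show "degree n E (hd P1) = 1" using P1 du[of u1] by simp
    fix j assume j: "0 < j" "Suc j < length P1"
    note f = interior_facts[OF P1(1) j]
    have "P1 ! j \<noteq> m2" using f g1c mdist m2c unfolding SS by auto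
    moreover have "P1 ! j < n" using f lt[OF P1(1) l1] by auto
    ultimately show "degree n E (P1 ! j) < 3" using f P1 nonmaj[of "P1 ! j"] by simp
  qed
  have A2: "arm n E P2"
  proof (rule arm_intro[OF sg P2(1) l2])
    show "degree n E (hd P2) = 1" using P2 du[of u2] by simp
    fix j assume j: "0 < j" "Suc j < length P2"
    note f = interior_facts[OF P2(1) j]
    have "P2 ! j \<noteq> m2" using f g2c mdist m2c unfolding SS by auto
    moreover have "P2 ! j < n" using f lt[OF P2(1) l2] by auto
    ultimately show "degree n E (P2 ! j) < 3" using f P2 nonmaj[of "P2 ! j"] by simp
  qed
  have A3: "arm n E P3"
  proof (rule arm_intro[OF sg P3(1) l3])
    show "degree n E (hd P3) = 1" using P3 du[of u3] by simp
    fix j assume j: "0 < j" "Suc j < length P3"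
    note f = interior_facts[OF P3(1) j]
    have "P3 ! j \<noteq> m1" using f g3c mdist m1c unfolding SS by auto
    moreover have "P3 ! j < n" using f lt[OF P3(1) l3] by auto
    ultimately show "degree n E (P3 ! j) < 3" using f P3 nonmaj[of "P3 ! j"] by simp
  qed
  have A4: "arm n E P4"
  proof (rule arm_intro[OF sg P4(1) l4])
    show "degree n E (hd P4) = 1" using P4 du[of u4] by simp
    fix j assume j: "0 < j" "Suc j < length P4"
    note f = interior_facts[OF P4(1) j]
    have "P4 ! j \<noteq> m1" using f g4c mdist m1c unfolding SS by auto
    moreover have "P4 ! j < n" using f lt[OF P4(1) l4] by auto
    ultimately show "degree n E (P4 ! j) < 3" using f P4 nonmaj[of "P4 ! j"] by simp
  qed
  have MC: "mid n E Pc"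
  proof (rule mid_intro[OF sg Pc(1) lc])
    fix j assume j: "0 < j" "Suc j < length Pc"
    note f = interior_facts[OF Pc(1) j]
    have "Pc ! j < n" using f lt[OF Pc(1) lc] by auto
    thus "degree n E (Pc ! j) < 3" using f Pc nonmaj[of "Pc ! j"] by simp
  qed
  have hc: "Pc ! 0 = m1" using Pc lc hd_conv_nth[of Pc] by fastforce
  have cover: "{0..<n} \<subseteq> set P1 \<union> set P2 \<union> set Pc \<union> set P3 \<union> set P4"
    using union unfolding SS by simp
  have NM1: "nbs n E (Pc ! 0) = {P1 ! (length P1 - 2), P2 ! (length P2 - 2), Pc ! 1}
     \<and> card (nbs n E (Pc ! 0)) = 3"
    by (rule nbs_m[OF sg nocyc A1 A2 MC Pc(1) P1(1) P2(1) A3 A4])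
       (use P1 P2 P3 P4 Pc hc g12 g1c g2c g3c g4c cover in \<open>auto simp: SS\<close>)
  have rPc: "is_path E (rev Pc)" using Pc(1) walk_rev[OF sym] by (simp add: is_path_def)
  have r0: "rev Pc ! 0 = m2" using Pc lc last_conv_nth[of Pc] rev_nth[of 0 Pc] by fastforce
  have r1: "rev Pc ! 1 = Pc ! (length Pc - 2)" using lc rev_nth[of 1 Pc] by (simp add: numeral_2_eq_2)
  have rl: "last (rev Pc) = m1" using Pc lc by (simp add: last_rev)
  have NM2: "nbs n E (rev Pc ! 0) = {P3 ! (length P3 - 2), P4 ! (length P4 - 2), rev Pc ! 1}
     \<and> card (nbs n E (rev Pc ! 0)) = 3"
    by (rule nbs_m[OF sg nocyc A3 A4 mid_rev[OF MC] rPc P3(1) P4(1) A1 A2])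
       (use P1 P2 P3 P4 Pc r0 rl g34 g3c g4c g1c g2c cover in \<open>auto simp: SS\<close>)
  have dist1: "dist_graph E u1 m1 = length P1 - 1" by (rule dist_path[OF sym nocyc P1])
  have dist2: "dist_graph E u2 m1 = length P2 - 1" by (rule dist_path[OF sym nocyc P2])
  have dist3: "dist_graph E u3 m2 = length P3 - 1" by (rule dist_path[OF sym nocyc P3])
  have dist4: "dist_graph E u4 m2 = length P4 - 1" by (rule dist_path[OF sym nocyc P4])
  have h10: "P1 ! 0 = u1" using P1 l1 hd_conv_nth[of P1] by fastforce
  have h20: "P2 ! 0 = u2" using P2 l2 hd_conv_nth[of P2] by fastforce
  have u1n: "u1 < n" and u2n: "u2 < n" using pu[of u1] pu[of u2] unfolding pendant_def by auto
  have e1: "last P1 = Pc ! 0" and e2: "last P2 = Pc ! 0" and e3: "last P3 = last Pc"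
    and e4: "last P4 = last Pc" using P1 P2 P3 P4 Pc hc by auto
  have nm2: "nbs n E (last Pc) = {P3 ! (length P3 - 2), P4 ! (length P4 - 2), Pc ! (length Pc - 2)}"
    and dm2: "card (nbs n E (last Pc)) = 3" using NM2 r0 r1 Pc by auto
  let ?L = "laplacian n E"
  have L: "?L \<in> carrier_mat n n" unfolding laplacian_def by simp
  have Lsym: "?L $$ (i, j) = ?L $$ (j, i)" if "i < n" "j < n" for i j
    using that sym unfolding laplacian_def by auto
  show ?thesis
  proof (rule ccontr)
    assume neg: "\<not> ?thesis"
    have de: "\<not> ((length P3 - 1) mod 3 = 1 \<and> (length P4 - 1) mod 3 = 1)"
      using neg dist3 dist4 by simp
    have "Polynomial.order 1 (char_poly ?L) \<le> 1"
    proof (cases "(length P2 - 1) mod 3 = 1")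
      case False
      show ?thesis
      proof (rule LA_main[OF L Lsym u1n])
        fix v :: "complex vec"
        assume v: "v \<in> carrier_vec n" and z: "char_matrix (map_mat complex_of_real ?L) 1 *\<^sub>v v = 0\<^sub>v n"
          and vi: "v $ u1 = 0"
        have k: "keq n E (\<lambda>i. v $ i)" by (rule keq_of_kernel[OF sg v z])
        have "\<forall>i<n. v $ i = 0"
          by (rule core[OF k A1 A2 A3 A4 MC e1 e2 e3 e4 NM1[THEN conjunct1] NM1[THEN conjunct2]
                nm2 dm2 cover False de]) (use vi h10 in simp)
        thus "v = 0\<^sub>v n" using v by (intro eq_vecI) auto
      qed
    next
      case True
      hence F: "(length P1 - 1) mod 3 \<noteq> 1" using neg dist1 dist2 by auto
      have NM1': "nbs n E (Pc ! 0) = {P2 ! (length P2 - 2), P1 ! (length P1 - 2), Pc ! 1}"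
        using NM1 by auto
      have cover': "{0..<n} \<subseteq> set P2 \<union> set P1 \<union> set Pc \<union> set P3 \<union> set P4" using cover by auto
      show ?thesis
      proof (rule LA_main[OF L Lsym u2n])
        fix v :: "complex vec"
        assume v: "v \<in> carrier_vec n" and z: "char_matrix (map_mat complex_of_real ?L) 1 *\<^sub>v v = 0\<^sub>v n"
          and vi: "v $ u2 = 0"
        have k: "keq n E (\<lambda>i. v $ i)" by (rule keq_of_kernel[OF sg v z])
        have "\<forall>i<n. v $ i = 0"
          by (rule core[OF k A2 A1 A3 A4 MC e2 e1 e3 e4 NM1' NM1[THEN conjunct2]
                nm2 dm2 cover' F de]) (use vi h20 in simp)
        thus "v = 0\<^sub>v n" using v by (intro eq_vecI) auto
      qed
    qed
    with mult show False unfolding lap_mult_def by simp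
  qed
qed


end
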